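(* Let $k\ge2$ be an integer. For all $n\ge1$, \[ \mathbb E\Big[\Big(X_{k,1}(T_n)-\int_0^\infty a_n(t)\,dt\Big)^2\Big]=\mathbb E\Big[\int_0^\infty a_n(t)\,dt\Big]. \]
   Context: $\xi$ is an offspring law on $\{0,1,\dots\}$ with mean 1 and $0<\sum_{p\ge2}p(p-1)\xi(p)<\infty$; $T_n$ is a Galton--Watson tree with law $\xi$ conditioned to have $n$ vertices. Each vertex $v$ carries an independent rate-1 Poisson process $N_v$; $\eta_{v,r}=\inf\{t:N_v(t)=r\}$, and $v$ is removed at time $\eta_v=\eta_{v,k}$. $T_n(t)$ is the set of vertices $v$ such that neither $v$ nor any ancestor of $v$ has been removed by time $t$. A vertex $v$ is a $1$-record if $v$ is still connected to the root at time $\eta_{v,1}$ (i.e. $v\in T_n(\eta_{v,1})$), and $X_{k,1}(T_n)$ is the number of 1-records. $a_n(t)=\#\{v\in T_n(t):N_v(t)=0\}$. *)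

theory Defs
  imports "HOL-Probability.Probability" "HOL-Library.Sublist"
begin

(* Plane (ordered) rooted trees; vertices are Ulam--Harris words (nat lists),
   the root is [], and the ancestors of v are the prefixes of v. *)
datatype ptree = Node "ptree list"

fun tsize :: "ptree \<Rightarrow> nat" where
  "tsize (Node ts) = Suc (sum_list (map tsize ts))"

function verts :: "ptree \<Rightarrow> nat list set" where
  "verts (Node ts) = {[]} \<union> (\<Union>i<length ts. (Cons i) ` verts (ts ! i))"
  by pat_completeness auto
termination
  by (relation "Wellfounded.measure size") (auto simp: less_Suc_eq_le intro!: size_list_estimation' nth_mem)

fun gw_weight :: "nat pmf \<Rightarrow> ptree \<Rightarrow> real" where
  "gw_weight xi (Node ts) = pmf xi (length ts) * prod_list (map (gw_weight xi) ts)"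

definition cond_GW_expect :: "nat pmf \<Rightarrow> nat \<Rightarrow> (ptree \<Rightarrow> real) \<Rightarrow> real" where
  "cond_GW_expect xi n F =
     (\<Sum>t | tsize t = n. gw_weight xi t * F t) / (\<Sum>t | tsize t = n. gw_weight xi t)"

(* Rate-1 Poisson processes: omega (v,i) is the i-th interarrival time (i = 0,1,...)
   of the process N_v; all i.i.d. Exp(1). *)
definition exp1 :: "real measure" where
  "exp1 = density lborel (exponential_density 1)"

definition PP :: "(nat list \<times> nat \<Rightarrow> real) measure" where
  "PP = PiM UNIV (\<lambda>_. exp1)"

definition arrival :: "(nat list \<times> nat \<Rightarrow> real) \<Rightarrow> nat list \<Rightarrow> nat \<Rightarrow> real" where
  "arrival \<omega> v r = (\<Sum>i<r. \<omega> (v, i))"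

definition Ncount :: "(nat list \<times> nat \<Rightarrow> real) \<Rightarrow> nat list \<Rightarrow> real \<Rightarrow> nat" where
  "Ncount \<omega> v t = card {r. 1 \<le> r \<and> arrival \<omega> v r \<le> t}"

definition eta :: "(nat list \<times> nat \<Rightarrow> real) \<Rightarrow> nat list \<Rightarrow> nat \<Rightarrow> real" where
  "eta \<omega> v r = Inf {t. Ncount \<omega> v t = r}"

(* T_n(s): vertices v such that neither v nor any ancestor has been removed by time s;
   vertex u is removed at time eta_{u,k} *)
definition alive :: "nat \<Rightarrow> ptree \<Rightarrow> (nat list \<times> nat \<Rightarrow> real) \<Rightarrow> real \<Rightarrow> nat list set" where
  "alive k T \<omega> s = {v \<in> verts T. \<forall>u. prefix u v \<longrightarrow> \<not> (eta \<omega> u k \<le> s)}"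

definition records1 :: "nat \<Rightarrow> ptree \<Rightarrow> (nat list \<times> nat \<Rightarrow> real) \<Rightarrow> nat" where
  "records1 k T \<omega> = card {v \<in> verts T. v \<in> alive k T \<omega> (eta \<omega> v 1)}"

definition a_fun :: "nat \<Rightarrow> ptree \<Rightarrow> (nat list \<times> nat \<Rightarrow> real) \<Rightarrow> real \<Rightarrow> nat" where
  "a_fun k T \<omega> s = card {v \<in> alive k T \<omega> s. Ncount \<omega> v s = 0}"

definition a_int :: "nat \<Rightarrow> ptree \<Rightarrow> (nat list \<times> nat \<Rightarrow> real) \<Rightarrow> real" where
  "a_int k T \<omega> = (LBINT s:{0..}. real (a_fun k T \<omega> s))"

end

theory Submission
  imports Defs
begin

lemma prob_exp1: "prob_space exp1"
  by (simp add: exp1_def prob_space_exponential_density)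

lemma sets_exp1[simp, measurable_cong]: "sets exp1 = sets borel"
  by (simp add: exp1_def)
lemma space_exp1[simp]: "space exp1 = UNIV"
  by (simp add: exp1_def)

lemma prob_PP: "prob_space PP"
  unfolding PP_def using prob_exp1 by (intro prob_space_PiM) auto

lemma PP_decomp: "distr (exp1 \<Otimes>\<^sub>M PP) PP (\<lambda>(e, X). X(x := e)) = PP"
  using distr_pair_PiM_eq_PiM[of UNIV "\<lambda>_. exp1" x] prob_exp1 unfolding PP_def by simp

lemma AE_exp1_pos: "AE e in exp1. 0 < e"
proof -
  have "AE e in lborel. e \<noteq> 0" by (rule AE_lborel_singleton)
  then show ?thesis unfolding exp1_def
    by (subst AE_density) (auto simp: exponential_density_def elim!: eventually_mono)
qed

lemma AE_PP_pos: "AE \<omega> in PP. \<forall>x. 0 < \<omega> x"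
proof -
  have "\<And>x. AE \<omega> in PP. 0 < \<omega> x"
    unfolding PP_def using prob_exp1 AE_exp1_pos by (intro AE_PiM_component) auto
  then show ?thesis by (subst AE_all_countable) auto
qed

lemma meas_upd[measurable]: "(\<lambda>(e, X). X(x := e)) \<in> measurable (exp1 \<Otimes>\<^sub>M PP) PP"
proof -
  have "(\<lambda>p. (snd p)(x := fst p)) \<in> measurable (exp1 \<Otimes>\<^sub>M PP) PP"
    unfolding PP_def by (rule measurable_fun_upd[where J=UNIV]) auto
  then show ?thesis by (simp add: case_prod_beta')
qed

interpretation pexp: pair_sigma_finite exp1 PP
proof -
  interpret a: prob_space exp1 by (rule prob_exp1)
  interpret b: prob_space PP by (rule prob_PP)
  show "pair_sigma_finite exp1 PP" by unfold_locales
qed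

lemma PP_integral_split:
  fixes F :: "(nat list \<times> nat \<Rightarrow> real) \<Rightarrow> real"
  assumes F: "integrable PP F"
  shows "integral\<^sup>L PP F = (\<integral>X. (\<integral>e. F (X(x:=e)) \<partial>exp1) \<partial>PP)"
proof -
  have Fm[measurable]: "F \<in> borel_measurable PP" using F by auto
  have "integral\<^sup>L PP F = integral\<^sup>L (distr (exp1 \<Otimes>\<^sub>M PP) PP (\<lambda>(e, X). X(x := e))) F"
    by (simp add: PP_decomp)
  also have "\<dots> = integral\<^sup>L (exp1 \<Otimes>\<^sub>M PP) (\<lambda>p. F ((\<lambda>(e, X). X(x := e)) p))"
    by (rule integral_distr) measurable
  also have "\<dots> = (\<integral>X. (\<integral>e. F (X(x:=e)) \<partial>exp1) \<partial>PP)"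
  proof -
    have "integrable (distr (exp1 \<Otimes>\<^sub>M PP) PP (\<lambda>(e, X). X(x := e))) F"
      by (simp add: PP_decomp F)
    then have "integrable (exp1 \<Otimes>\<^sub>M PP) (\<lambda>p. F ((\<lambda>(e, X). X(x := e)) p))"
      by (subst (asm) integrable_distr_eq) auto
    then have "integrable (exp1 \<Otimes>\<^sub>M PP) (case_prod (\<lambda>e X. F (X(x := e))))"
      by (simp add: case_prod_beta')
    from pexp.integral_snd[OF this] show ?thesis by (simp add: case_prod_beta')
  qed
  finally show ?thesis .
qed

lemma PP_nn_split:
  assumes F[measurable]: "F \<in> borel_measurable PP"
  shows "integral\<^sup>N PP F = (\<integral>\<^sup>+X. (\<integral>\<^sup>+e. F (X(x:=e)) \<partial>exp1) \<partial>PP)"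
proof -
  have "integral\<^sup>N PP F = integral\<^sup>N (distr (exp1 \<Otimes>\<^sub>M PP) PP (\<lambda>(e, X). X(x := e))) F"
    by (simp add: PP_decomp)
  also have "\<dots> = integral\<^sup>N (exp1 \<Otimes>\<^sub>M PP) (\<lambda>p. F ((\<lambda>(e, X). X(x := e)) p))"
    by (rule nn_integral_distr) measurable
  also have "\<dots> = (\<integral>\<^sup>+X. (\<integral>\<^sup>+e. F (X(x:=e)) \<partial>exp1) \<partial>PP)"
    by (subst pexp.nn_integral_snd[symmetric]) (auto simp: case_prod_beta')
  finally show ?thesis .
qed

lemma PP_integral_zero:
  fixes F :: "(nat list \<times> nat \<Rightarrow> real) \<Rightarrow> real"
  assumes F: "integrable PP F"
    and Z: "AE X in PP. (\<integral>e. F (X(x:=e)) \<partial>exp1) = 0"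
  shows "integral\<^sup>L PP F = 0"
proof -
  have "integral\<^sup>L PP F = (\<integral>X. (\<integral>e. F (X(x:=e)) \<partial>exp1) \<partial>PP)"
    by (rule PP_integral_split[OF F])
  also have "\<dots> = (\<integral>X. 0 \<partial>PP)"
  proof (rule integral_cong_AE)
    have "integrable PP (\<lambda>X. \<integral>e. F (X(x:=e)) \<partial>exp1)"
    proof -
      have "integrable (distr (exp1 \<Otimes>\<^sub>M PP) PP (\<lambda>(e, X). X(x := e))) F"
        by (simp add: PP_decomp F)
      then have "integrable (exp1 \<Otimes>\<^sub>M PP) (\<lambda>p. F ((\<lambda>(e, X). X(x := e)) p))"
        using F by (subst (asm) integrable_distr_eq) auto
      then have "integrable (exp1 \<Otimes>\<^sub>M PP) (case_prod (\<lambda>e X. F (X(x := e))))"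
        by (simp add: case_prod_beta')
      from pexp.integrable_snd[OF this] show ?thesis .
    qed
    then show "(\<lambda>X. \<integral>e. F (X(x:=e)) \<partial>exp1) \<in> borel_measurable PP" by auto
  qed (use Z in auto)
  finally show ?thesis by simp
qed

lemma exp1_distributed: "distributed exp1 lborel (\<lambda>x. x) (erlang_density 0 1)"
  unfolding distributed_def exp1_def
  by (auto simp: distr_id2)

lemma exp1_moment:
  "has_bochner_integral exp1 (\<lambda>x. x ^ i) (fact i)"
proof -
  interpret prob_space exp1 by (rule prob_exp1)
  show ?thesis using has_bochner_integral_erlang_ith_moment[OF _ exp1_distributed, of i] by simp
qed

lemma exp1_int_pow: "integrable exp1 (\<lambda>x. x ^ i)" "integral\<^sup>L exp1 (\<lambda>x. x ^ i) = fact i"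
  using exp1_moment[of i] by (auto simp: has_bochner_integral_iff)

lemma exp1_int_1: "integrable exp1 (\<lambda>x. x)" "integral\<^sup>L exp1 (\<lambda>x. x) = 1"
  using exp1_int_pow[of 1] by auto

lemma exp1_int_2: "integrable exp1 (\<lambda>x. x^2)" "integral\<^sup>L exp1 (\<lambda>x. x^2) = 2"
  using exp1_int_pow[of 2] by (auto simp: numeral_2_eq_2)

lemma exp1_int_0: "integrable exp1 (\<lambda>x. 1::real)" "integral\<^sup>L exp1 (\<lambda>x. 1::real) = 1"
proof -
  interpret prob_space exp1 by (rule prob_exp1)
  show "integrable exp1 (\<lambda>x. 1::real)" "integral\<^sup>L exp1 (\<lambda>x. 1::real) = 1" using prob_space by auto
qed

lemma exp1_int_c: "integrable exp1 (\<lambda>x. c::real)"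
proof -
  interpret prob_space exp1 by (rule prob_exp1)
  show ?thesis by auto
qed

lemma exp1_trunc:
  fixes p F :: "real \<Rightarrow> real" and d :: real
  assumes d: "0 \<le> d"
    and F: "\<And>x. (F has_real_derivative (exp (- x) * p x)) (at x)"
    and p: "continuous_on UNIV p"
  shows "integrable exp1 (\<lambda>e. if e < d then p e else 0)"
    and "integral\<^sup>L exp1 (\<lambda>e. if e < d then p e else 0) = F d - F 0"
proof -
  have pm[measurable]: "p \<in> borel_measurable borel"
    using p by (simp add: borel_measurable_continuous_onI)
  have eq: "AE x in lborel. exponential_density 1 x * (if x < d then p x else 0)
      = indicator {0..d} x * (exp (- x) * p x)"
    using AE_lborel_singleton[of d]
    by (auto elim!: eventually_mono simp: exponential_density_def indicator_def)
  have cont: "continuous_on {0..d} (\<lambda>x. exp (- x) * p x)"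
    by (intro continuous_intros continuous_on_subset[OF p]) auto
  have i1: "integrable lborel (\<lambda>x. indicator {0..d} x * (exp (- x) * p x))"
  proof -
    have "integrable lborel (\<lambda>x. (exp (- x) * p x) * indicator {0..d} x)"
      by (rule borel_integrable_atLeastAtMost) (auto intro!: continuous_intros continuous_on_interior[OF p])
    then show ?thesis by (simp add: mult.commute)
  qed
  have i2: "integrable lborel (\<lambda>x. exponential_density 1 x * (if x < d then p x else 0))"
    by (rule integrable_cong_AE_imp[OF i1]) (use eq in \<open>auto elim!: eventually_mono\<close>)
  show "integrable exp1 (\<lambda>e. if e < d then p e else 0)"
    unfolding exp1_def
    by (subst integrable_density) (use i2 in \<open>auto simp: exponential_density_nonneg\<close>)
  have "integral\<^sup>L exp1 (\<lambda>e. if e < d then p e else 0) =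
      integral\<^sup>L lborel (\<lambda>x. exponential_density 1 x * (if x < d then p x else 0))"
    unfolding exp1_def by (subst integral_density) (auto simp: exponential_density_nonneg)
  also have "\<dots> = integral\<^sup>L lborel (\<lambda>x. indicator {0..d} x *\<^sub>R (exp (- x) * p x))"
    by (rule integral_cong_AE) (use eq in auto)
  also have "\<dots> = F d - F 0"
    by (rule integral_FTC_atLeastAtMost[OF d])
       (auto intro!: cont DERIV_subset[OF F] simp: has_real_derivative_iff_has_vector_derivative[symmetric])
  finally show "integral\<^sup>L exp1 (\<lambda>e. if e < d then p e else 0) = F d - F 0" .
qed

lemma phi1_zero:
  fixes d :: real assumes d: "0 < d"
  shows "integrable exp1 (\<lambda>e. (if e < d then 1 else 0) - min e d)"
    and "integral\<^sup>L exp1 (\<lambda>e. (if e < d then 1 else 0) - min e d) = 0"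
proof -
  define F where "F x = x * exp (- x) - d * exp (- x)" for x :: real
  have Fd: "(F has_real_derivative (exp (- x) * (1 - x + d))) (at x)" for x
    unfolding F_def by (auto intro!: derivative_eq_intros simp: algebra_simps)
  note T = exp1_trunc[of d F "\<lambda>x. 1 - x + d", OF _ Fd]
  have c: "continuous_on UNIV (\<lambda>x::real. 1 - x + d)" by (intro continuous_intros)
  have eq: "(\<lambda>e. (if e < d then 1 else 0) - min e d) = (\<lambda>e. (if e < d then 1 - e + d else 0) - d)"
    by (auto simp: fun_eq_iff min_def)
  show "integrable exp1 (\<lambda>e. (if e < d then 1 else 0) - min e d)"
    unfolding eq using T(1)[OF _ c] d exp1_int_c by auto
  have "integral\<^sup>L exp1 (\<lambda>e. (if e < d then 1 - e + d else 0) - d) =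
      integral\<^sup>L exp1 (\<lambda>e. (if e < d then 1 - e + d else 0)) - integral\<^sup>L exp1 (\<lambda>e. d)"
    using T(1)[OF _ c] d exp1_int_c by (intro Bochner_Integration.integral_diff) auto
  also have "\<dots> = 0"
    using T(2)[OF _ c] d exp1_int_0 by (simp add: F_def)
  finally show "integral\<^sup>L exp1 (\<lambda>e. (if e < d then 1 else 0) - min e d) = 0" unfolding eq .
qed

lemma phi2_zero:
  fixes d :: real assumes d: "0 < d"
  shows "integrable exp1 (\<lambda>e. ((if e < d then 1 else 0) - min e d)\<^sup>2 - min e d)"
    and "integral\<^sup>L exp1 (\<lambda>e. ((if e < d then 1 else 0) - min e d)\<^sup>2 - min e d) = 0"
proof -
  define c where "c = d\<^sup>2 - d"
  define F where "F x = (x - x\<^sup>2) * exp (- x) + c * exp (- x)" for x :: real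
  have Fd: "(F has_real_derivative (exp (- x) * (1 - 3 * x + x\<^sup>2 - c))) (at x)" for x
    unfolding F_def by (auto intro!: derivative_eq_intros simp: algebra_simps power2_eq_square)
  note T = exp1_trunc[of d F "\<lambda>x. 1 - 3 * x + x\<^sup>2 - c", OF _ Fd]
  have cc: "continuous_on UNIV (\<lambda>x::real. 1 - 3 * x + x\<^sup>2 - c)" by (intro continuous_intros)
  have eq: "(\<lambda>e. ((if e < d then 1 else 0) - min e d)\<^sup>2 - min e d) =
     (\<lambda>e. (if e < d then 1 - 3 * e + e\<^sup>2 - c else 0) + c)"
    by (auto simp: fun_eq_iff min_def c_def power2_eq_square algebra_simps)
  show "integrable exp1 (\<lambda>e. ((if e < d then 1 else 0) - min e d)\<^sup>2 - min e d)"
    unfolding eq using T(1)[OF _ cc] d exp1_int_c by auto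
  have "integral\<^sup>L exp1 (\<lambda>e. (if e < d then 1 - 3 * e + e\<^sup>2 - c else 0) + c) =
      integral\<^sup>L exp1 (\<lambda>e. (if e < d then 1 - 3 * e + e\<^sup>2 - c else 0)) + integral\<^sup>L exp1 (\<lambda>e. c)"
    using T(1)[OF _ cc] d exp1_int_c by (intro Bochner_Integration.integral_add) auto
  also have "\<dots> = 0"
    using T(2)[OF _ cc] d exp1_int_0 by (simp add: F_def c_def algebra_simps power2_eq_square)
  finally show "integral\<^sup>L exp1 (\<lambda>e. ((if e < d then 1 else 0) - min e d)\<^sup>2 - min e d) = 0" unfolding eq .
qed

lemma psi1_zero:
  shows "integrable exp1 (\<lambda>e. 1 - e)" and "integral\<^sup>L exp1 (\<lambda>e. 1 - e) = 0"
  using exp1_int_0 exp1_int_1 by auto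

lemma psi2_zero:
  shows "integrable exp1 (\<lambda>e. (1 - e)\<^sup>2 - e)" and "integral\<^sup>L exp1 (\<lambda>e. (1 - e)\<^sup>2 - e) = 0"
proof -
  have eq: "(\<lambda>e::real. (1 - e)\<^sup>2 - e) = (\<lambda>e. 1 - 3 * e + e\<^sup>2)"
    by (auto simp: fun_eq_iff power2_eq_square algebra_simps)
  show "integrable exp1 (\<lambda>e. (1 - e)\<^sup>2 - e)" unfolding eq
    using exp1_int_0 exp1_int_1 exp1_int_2 by auto
  show "integral\<^sup>L exp1 (\<lambda>e. (1 - e)\<^sup>2 - e) = 0" unfolding eq
    using exp1_int_0 exp1_int_1 exp1_int_2 by simp
qed

lemma exp1_c1: "(\<integral>\<^sup>+e. ennreal (1 + \<bar>e\<bar>) \<partial>exp1) < \<infinity>"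
proof -
  have "integrable exp1 (\<lambda>e. 1 + \<bar>e\<bar>)"
    using exp1_int_c exp1_int_1 by auto
  then show ?thesis unfolding integrable_iff_bounded by simp
qed

lemma exp1_c2: "(\<integral>\<^sup>+e. ennreal ((1 + \<bar>e\<bar>) * (1 + \<bar>e\<bar>)) \<partial>exp1) < \<infinity>"
proof -
  have eq: "(\<lambda>e::real. (1 + \<bar>e\<bar>) * (1 + \<bar>e\<bar>)) = (\<lambda>e. 1 + 2 * \<bar>e\<bar> + e^2)"
    by (auto simp: fun_eq_iff algebra_simps power2_eq_square)
  have "integrable exp1 (\<lambda>e. (1 + \<bar>e\<bar>) * (1 + \<bar>e\<bar>))"
    unfolding eq using exp1_int_c exp1_int_1 exp1_int_2 by auto
  then show ?thesis unfolding integrable_iff_bounded by simp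
qed

lemma PP_int_prod: "integrable PP (\<lambda>\<omega>. (1 + \<bar>\<omega> a\<bar>) * (1 + \<bar>\<omega> b\<bar>))"
proof -
  interpret P: prob_space PP by (rule prob_PP)
  have m[measurable]: "(\<lambda>\<omega>. (1 + \<bar>\<omega> a\<bar>) * (1 + \<bar>\<omega> b\<bar>)) \<in> borel_measurable PP"
    unfolding PP_def by measurable
  define c1 where "c1 = (\<integral>\<^sup>+e. ennreal (1 + \<bar>e\<bar>) \<partial>exp1)"
  define c2 where "c2 = (\<integral>\<^sup>+e. ennreal ((1 + \<bar>e\<bar>) * (1 + \<bar>e\<bar>)) \<partial>exp1)"
  have "(\<integral>\<^sup>+\<omega>. ennreal ((1 + \<bar>\<omega> a\<bar>) * (1 + \<bar>\<omega> b\<bar>)) \<partial>PP) < \<infinity>"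
  proof (cases "a = b")
    case True
    have [measurable]: "(\<lambda>\<omega>. ((1 + \<bar>\<omega> b\<bar>) * (1 + \<bar>\<omega> b\<bar>))) \<in> borel_measurable PP"
      unfolding PP_def by measurable
    have "(\<integral>\<^sup>+\<omega>. ennreal ((1 + \<bar>\<omega> a\<bar>) * (1 + \<bar>\<omega> b\<bar>)) \<partial>PP) = (\<integral>\<^sup>+X. c2 \<partial>PP)"
      by (subst PP_nn_split[where x=a]) (auto simp: True c2_def)
    also have "\<dots> = c2" by (simp add: P.emeasure_space_1 del: space_exp1)
    finally show ?thesis using exp1_c2 c2_def by simp
  next
    case False
    have bm[measurable]: "(\<lambda>\<omega>. ennreal (1 + \<bar>\<omega> b\<bar>)) \<in> borel_measurable PP"
      unfolding PP_def by measurable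
    have "(\<integral>\<^sup>+\<omega>. ennreal ((1 + \<bar>\<omega> a\<bar>) * (1 + \<bar>\<omega> b\<bar>)) \<partial>PP) =
        (\<integral>\<^sup>+X. (\<integral>\<^sup>+e. ennreal ((1 + \<bar>(X(a:=e)) a\<bar>) * (1 + \<bar>(X(a:=e)) b\<bar>)) \<partial>exp1) \<partial>PP)"
      by (rule PP_nn_split) measurable
    also have "\<dots> = (\<integral>\<^sup>+X. (\<integral>\<^sup>+e. ennreal (1 + \<bar>e\<bar>) * ennreal (1 + \<bar>X b\<bar>) \<partial>exp1) \<partial>PP)"
      using False by (simp add: ennreal_mult del: ennreal_plus)
    also have "\<dots> = (\<integral>\<^sup>+X. c1 * ennreal (1 + \<bar>X b\<bar>) \<partial>PP)"
      by (subst nn_integral_multc) (auto simp: c1_def)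
    also have "\<dots> = c1 * (\<integral>\<^sup>+X. ennreal (1 + \<bar>X b\<bar>) \<partial>PP)"
      by (rule nn_integral_cmult) (rule bm)
    also have "(\<integral>\<^sup>+X. ennreal (1 + \<bar>X b\<bar>) \<partial>PP) = (\<integral>\<^sup>+X. c1 \<partial>PP)"
      using PP_nn_split[OF bm, of b] by (simp add: c1_def del: ennreal_plus)
    also have "\<dots> = c1" by (simp add: P.emeasure_space_1 del: space_exp1)
    finally show ?thesis using exp1_c1 c1_def by (simp add: ennreal_mult_less_top)
  qed
  then show ?thesis
    by (intro integrableI_nonneg m) auto
qed

lemma inner_zero1:
  fixes r :: "'a \<Rightarrow> real"
  assumes S: "finite S" and r: "\<forall>u\<in>S. 0 < r u"
  shows "integral\<^sup>L exp1 (\<lambda>e. (if \<forall>u\<in>S. e < r u then 1 else 0) - Min (insert e (r ` S))) = 0"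
proof (cases "S = {}")
  case True then show ?thesis using psi1_zero by simp
next
  case False
  define d where "d = Min (r ` S)"
  have d: "0 < d" using S False r by (simp add: d_def)
  have eq: "(\<lambda>e. (if \<forall>u\<in>S. e < r u then 1 else 0) - Min (insert e (r ` S))) =
      (\<lambda>e. (if e < d then 1 else 0) - min e d)"
    using S False by (auto simp: fun_eq_iff d_def Min_gr_iff)
  show ?thesis unfolding eq using phi1_zero[OF d] by simp
qed

lemma inner_zero2:
  fixes r :: "'a \<Rightarrow> real"
  assumes S: "finite S" and r: "\<forall>u\<in>S. 0 < r u"
  shows "integral\<^sup>L exp1 (\<lambda>e. ((if \<forall>u\<in>S. e < r u then 1 else 0) - Min (insert e (r ` S)))\<^sup>2
      - Min (insert e (r ` S))) = 0"
proof (cases "S = {}")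
  case True then show ?thesis using psi2_zero by simp
next
  case False
  define d where "d = Min (r ` S)"
  have d: "0 < d" using S False r by (simp add: d_def)
  have eq: "(\<lambda>e. ((if \<forall>u\<in>S. e < r u then 1 else 0) - Min (insert e (r ` S)))\<^sup>2 - Min (insert e (r ` S))) =
      (\<lambda>e. ((if e < d then 1 else 0) - min e d)\<^sup>2 - min e d)"
    using S False by (auto simp: fun_eq_iff d_def Min_gr_iff)
  show ?thesis unfolding eq using phi2_zero[OF d] by simp
qed

type_synonym om = "nat list \<times> nat \<Rightarrow> real"

definition Rk :: "nat \<Rightarrow> om \<Rightarrow> nat list \<Rightarrow> real" where
  "Rk k \<omega> u = (\<Sum>i<k. \<omega> (u, i))"
definition SP :: "nat list \<Rightarrow> nat list set" where
  "SP v = {u. strict_prefix u v}"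
definition Ind :: "nat \<Rightarrow> om \<Rightarrow> nat list \<Rightarrow> real" where
  "Ind k \<omega> v = (if \<forall>u\<in>SP v. \<omega> (v, 0) < Rk k \<omega> u then 1 else 0)"
definition Mv :: "nat \<Rightarrow> om \<Rightarrow> nat list \<Rightarrow> real" where
  "Mv k \<omega> v = Min (insert (\<omega> (v, 0)) ((\<lambda>u. Rk k \<omega> u) ` SP v))"
definition Yv :: "nat \<Rightarrow> om \<Rightarrow> nat list \<Rightarrow> real" where
  "Yv k \<omega> v = Ind k \<omega> v - Mv k \<omega> v"

lemma finite_SP[simp]: "finite (SP v)"
proof -
  have "SP v \<subseteq> set (prefixes v)" by (auto simp: SP_def)
  then show ?thesis by (rule finite_subset) simp
qed

lemma not_SP_self[simp]: "v \<notin> SP v"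
  by (simp add: SP_def)

lemma SP_asym: "w \<in> SP v \<Longrightarrow> v \<notin> SP w"
  by (auto simp: SP_def dest: prefix_order.less_asym)

lemma Rk_upd: "u \<noteq> w \<Longrightarrow> Rk k (X(Pair w j := e)) u = Rk k X u"
  by (simp add: Rk_def)

lemma Rk_pos: "0 < k \<Longrightarrow> \<forall>x. 0 < X x \<Longrightarrow> 0 < Rk k X u"
  unfolding Rk_def by (intro sum_pos) auto

lemma Yv_upd_other: "w \<noteq> v \<Longrightarrow> w \<notin> SP v \<Longrightarrow> Yv k (X(Pair w 0 := e)) v = Yv k X v"
proof -
  assume a: "w \<noteq> v" "w \<notin> SP v"
  have "\<And>u. u \<in> SP v \<Longrightarrow> Rk k (X(Pair w 0 := e)) u = Rk k X u"
    using a by (intro Rk_upd) auto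
  then show ?thesis using a
    by (simp add: Yv_def Ind_def Mv_def cong: image_cong)
qed

lemma Yv_upd_self: "Yv k (X(Pair w 0 := e)) w =
   (if \<forall>u\<in>SP w. e < Rk k X u then 1 else 0) - Min (insert e ((\<lambda>u. Rk k X u) ` SP w))"
proof -
  have "\<And>u. u \<in> SP w \<Longrightarrow> Rk k (X(Pair w 0 := e)) u = Rk k X u"
    by (intro Rk_upd) auto
  then show ?thesis
    by (simp add: Yv_def Ind_def Mv_def cong: image_cong)
qed

lemma Mv_upd_self: "Mv k (X(Pair w 0 := e)) w = Min (insert e ((\<lambda>u. Rk k X u) ` SP w))"
proof -
  have "\<And>u. u \<in> SP w \<Longrightarrow> Rk k (X(Pair w 0 := e)) u = Rk k X u"
    by (intro Rk_upd) auto
  then show ?thesis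
    by (simp add: Mv_def cong: image_cong)
qed

lemma meas_Min_ins:
  fixes f :: "'b \<Rightarrow> real"
  assumes S: "finite S" and f: "f \<in> borel_measurable M" and g: "\<forall>u\<in>S. g u \<in> borel_measurable M"
  shows "(\<lambda>x. Min (insert (f x) ((\<lambda>u. g u x) ` S))) \<in> borel_measurable M"
  using S g
proof (induction S rule: finite_induct)
  case empty then show ?case using f by simp
next
  case (insert u S)
  have eq: "(\<lambda>x. Min (insert (f x) ((\<lambda>u. g u x) ` insert u S))) =
     (\<lambda>x. min (g u x) (Min (insert (f x) ((\<lambda>u. g u x) ` S))))"
  proof (rule ext)
    fix x
    have "Min (insert (f x) ((\<lambda>u. g u x) ` insert u S)) = Min (insert (g u x) (insert (f x) ((\<lambda>u. g u x) ` S)))"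
      by (simp add: insert_commute)
    also have "\<dots> = min (g u x) (Min (insert (f x) ((\<lambda>u. g u x) ` S)))"
      using insert(1) by (intro Min_insert) auto
    finally show "Min (insert (f x) ((\<lambda>u. g u x) ` insert u S)) = min (g u x) (Min (insert (f x) ((\<lambda>u. g u x) ` S)))" .
  qed
  have "g u \<in> borel_measurable M" using insert by auto
  moreover have "(\<lambda>x. Min (insert (f x) ((\<lambda>u. g u x) ` S))) \<in> borel_measurable M"
    using insert by auto
  ultimately show ?case unfolding eq by measurable
qed

lemma Rk_meas[measurable]: "(\<lambda>X. Rk k X u) \<in> borel_measurable PP"
  unfolding Rk_def PP_def by measurable

lemma comp_meas[measurable]: "(\<lambda>X. X x) \<in> borel_measurable PP"
  unfolding PP_def by measurable

lemma Mv_meas[measurable]: "(\<lambda>X. Mv k X v) \<in> borel_measurable PP"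
  unfolding Mv_def by (rule meas_Min_ins) auto

lemma Ind_meas[measurable]: "(\<lambda>X. Ind k X v) \<in> borel_measurable PP"
  unfolding Ind_def by measurable

lemma Yv_meas[measurable]: "(\<lambda>X. Yv k X v) \<in> borel_measurable PP"
  unfolding Yv_def by measurable

lemma Mv_bounds:
  assumes k: "0 < k" and p: "\<forall>x. 0 < X x"
  shows "0 < Mv k X v" "Mv k X v \<le> X (v, 0)"
  using p Rk_pos[OF k p] by (auto simp: Mv_def Min_gr_iff)

lemma Yv_bound:
  assumes k: "0 < k" and p: "\<forall>x. 0 < X x"
  shows "\<bar>Yv k X v\<bar> \<le> 1 + \<bar>X (v, 0)\<bar>"
  using Mv_bounds[OF k p, of v] by (auto simp: Yv_def Ind_def)

lemma Yv_prod_int: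
  assumes k: "0 < k"
  shows "integrable PP (\<lambda>X. Yv k X v * Yv k X w)"
proof (rule Bochner_Integration.integrable_bound[OF PP_int_prod[of "(v,0)" "(w,0)"]])
  show "AE X in PP. norm (Yv k X v * Yv k X w) \<le> norm ((1 + \<bar>X (v, 0)\<bar>) * (1 + \<bar>X (w, 0)\<bar>))"
    using AE_PP_pos
  proof (rule eventually_mono)
    fix X :: om assume p: "\<forall>x. 0 < X x"
    show "norm (Yv k X v * Yv k X w) \<le> norm ((1 + \<bar>X (v, 0)\<bar>) * (1 + \<bar>X (w, 0)\<bar>))"
      using Yv_bound[OF k p, of v] Yv_bound[OF k p, of w]
      by (simp add: abs_mult mult_mono)
  qed
qed measurable

lemma Mv_int:
  assumes k: "0 < k"
  shows "integrable PP (\<lambda>X. Mv k X v)"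
proof (rule Bochner_Integration.integrable_bound[OF PP_int_prod[of "(v,0)" "(v,0)"]])
  show "AE X in PP. norm (Mv k X v) \<le> norm ((1 + \<bar>X (v, 0)\<bar>) * (1 + \<bar>X (v, 0)\<bar>))"
    using AE_PP_pos
  proof (rule eventually_mono)
    fix X :: om assume p: "\<forall>x. 0 < X x"
    have "Mv k X v \<le> (1 + \<bar>X (v, 0)\<bar>) * (1 + \<bar>X (v, 0)\<bar>)"
      using Mv_bounds[OF k p, of v] p by (simp add: algebra_simps) (smt (verit) zero_le_square)
    then show "norm (Mv k X v) \<le> norm ((1 + \<bar>X (v, 0)\<bar>) * (1 + \<bar>X (v, 0)\<bar>))"
      using Mv_bounds[OF k p, of v] by simp
  qed
qed measurable

lemma cross_zero:
  assumes k: "0 < k" and vw: "w \<noteq> v" "w \<notin> SP v"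
  shows "integral\<^sup>L PP (\<lambda>X. Yv k X v * Yv k X w) = 0"
proof (rule PP_integral_zero[where x="(w, 0)"])
  show "integrable PP (\<lambda>X. Yv k X v * Yv k X w)" by (rule Yv_prod_int[OF k])
  show "AE X in PP. (\<integral>e. Yv k (X((w, 0) := e)) v * Yv k (X((w, 0) := e)) w \<partial>exp1) = 0"
    using AE_PP_pos
  proof (rule eventually_mono)
    fix X :: om assume p: "\<forall>x. 0 < X x"
    have "(\<integral>e. Yv k (X((w, 0) := e)) v * Yv k (X((w, 0) := e)) w \<partial>exp1) =
       (\<integral>e. Yv k X v * ((if \<forall>u\<in>SP w. e < Rk k X u then 1 else 0) - Min (insert e ((\<lambda>u. Rk k X u) ` SP w))) \<partial>exp1)"
      using vw by (simp add: Yv_upd_other Yv_upd_self)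
    also have "\<dots> = Yv k X v * (\<integral>e. ((if \<forall>u\<in>SP w. e < Rk k X u then 1 else 0) - Min (insert e ((\<lambda>u. Rk k X u) ` SP w))) \<partial>exp1)"
      by simp
    also have "\<dots> = 0"
      using inner_zero1[of "SP w" "\<lambda>u. Rk k X u"] Rk_pos[OF k p] by simp
    finally show "(\<integral>e. Yv k (X((w, 0) := e)) v * Yv k (X((w, 0) := e)) w \<partial>exp1) = 0" .
  qed
qed

lemma diag_zero:
  assumes k: "0 < k"
  shows "integral\<^sup>L PP (\<lambda>X. (Yv k X v)\<^sup>2 - Mv k X v) = 0"
proof (rule PP_integral_zero[where x="(v, 0)"])
  show "integrable PP (\<lambda>X. (Yv k X v)\<^sup>2 - Mv k X v)"
    using Yv_prod_int[OF k, of v v] Mv_int[OF k, of v] by (simp add: power2_eq_square)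
  show "AE X in PP. (\<integral>e. (Yv k (X((v, 0) := e)) v)\<^sup>2 - Mv k (X((v, 0) := e)) v \<partial>exp1) = 0"
    using AE_PP_pos
  proof (rule eventually_mono)
    fix X :: om assume p: "\<forall>x. 0 < X x"
    show "(\<integral>e. (Yv k (X((v, 0) := e)) v)\<^sup>2 - Mv k (X((v, 0) := e)) v \<partial>exp1) = 0"
      using inner_zero2[of "SP v" "\<lambda>u. Rk k X u"] Rk_pos[OF k p]
      by (simp add: Yv_upd_self Mv_upd_self)
  qed
qed

lemma main_identity:
  assumes k: "0 < k" and V: "finite V"
  shows "integral\<^sup>L PP (\<lambda>X. (\<Sum>v\<in>V. Yv k X v)\<^sup>2) = integral\<^sup>L PP (\<lambda>X. \<Sum>v\<in>V. Mv k X v)"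
proof -
  have "integral\<^sup>L PP (\<lambda>X. (\<Sum>v\<in>V. Yv k X v)\<^sup>2) = integral\<^sup>L PP (\<lambda>X. \<Sum>v\<in>V. \<Sum>w\<in>V. Yv k X v * Yv k X w)"
    by (simp add: power2_eq_square sum_product)
  also have "\<dots> = (\<Sum>v\<in>V. \<Sum>w\<in>V. integral\<^sup>L PP (\<lambda>X. Yv k X v * Yv k X w))"
    using Yv_prod_int[OF k]
    by (simp add: Bochner_Integration.integral_sum Bochner_Integration.integrable_sum)
  also have "\<dots> = (\<Sum>v\<in>V. integral\<^sup>L PP (\<lambda>X. Yv k X v * Yv k X v))"
  proof (rule sum.cong[OF refl])
    fix v assume v: "v \<in> V"
    have "(\<Sum>w\<in>V. integral\<^sup>L PP (\<lambda>X. Yv k X v * Yv k X w)) =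
        (\<Sum>w\<in>V. if w = v then integral\<^sup>L PP (\<lambda>X. Yv k X v * Yv k X w) else 0)"
    proof (rule sum.cong[OF refl])
      fix w assume "w \<in> V"
      show "integral\<^sup>L PP (\<lambda>X. Yv k X v * Yv k X w) =
          (if w = v then integral\<^sup>L PP (\<lambda>X. Yv k X v * Yv k X w) else 0)"
      proof (cases "w = v")
        case False
        show ?thesis
        proof (cases "w \<in> SP v")
          case False2: False
          show ?thesis using cross_zero[OF k \<open>w \<noteq> v\<close> False2] False by simp
        next
          case True
          have "v \<notin> SP w" using SP_asym[OF True] .
          then have "integral\<^sup>L PP (\<lambda>X. Yv k X w * Yv k X v) = 0"
            using cross_zero[OF k, of v w] False by simp
          then show ?thesis using False by (simp add: mult.commute)
        qed
      qed simp
    qed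
    also have "\<dots> = integral\<^sup>L PP (\<lambda>X. Yv k X v * Yv k X v)"
      using V v by (simp add: sum.delta)
    finally show "(\<Sum>w\<in>V. integral\<^sup>L PP (\<lambda>X. Yv k X v * Yv k X w)) = integral\<^sup>L PP (\<lambda>X. Yv k X v * Yv k X v)" .
  qed
  also have "\<dots> = (\<Sum>v\<in>V. integral\<^sup>L PP (\<lambda>X. Mv k X v))"
  proof (rule sum.cong[OF refl])
    fix v
    have "integral\<^sup>L PP (\<lambda>X. (Yv k X v)\<^sup>2 - Mv k X v) =
        integral\<^sup>L PP (\<lambda>X. Yv k X v * Yv k X v) - integral\<^sup>L PP (\<lambda>X. Mv k X v)"
      using Yv_prod_int[OF k, of v v] Mv_int[OF k, of v]
      by (simp add: power2_eq_square Bochner_Integration.integral_diff)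
    then show "integral\<^sup>L PP (\<lambda>X. Yv k X v * Yv k X v) = integral\<^sup>L PP (\<lambda>X. Mv k X v)"
      using diag_zero[OF k, of v] by simp
  qed
  also have "\<dots> = integral\<^sup>L PP (\<lambda>X. \<Sum>v\<in>V. Mv k X v)"
    using Mv_int[OF k] by (simp add: Bochner_Integration.integral_sum)
  finally show ?thesis .
qed

lemma finite_verts[simp]: "finite (verts T)"
proof (induction T)
  case (Node ts)
  have "\<And>i. i < length ts \<Longrightarrow> finite (verts (ts ! i))"
    using Node by (auto intro: nth_mem)
  then show ?case by simp
qed

lemma arrival_Suc: "arrival X v (Suc r) = arrival X v r + X (v, r)"
  by (simp add: arrival_def)

lemma arrival_smono:
  assumes p: "\<forall>x. 0 < X x"
  shows "strict_mono (arrival X v)"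
  by (rule strict_mono_Suc_iff[THEN iffD2]) (use p in \<open>auto simp: arrival_Suc\<close>)

lemma Ncount_eq_iff:
  assumes p: "\<forall>x. 0 < X x" and r: "1 \<le> r"
  shows "Ncount X v t = r \<longleftrightarrow> arrival X v r \<le> t \<and> t < arrival X v (Suc r)"
proof -
  note sm = arrival_smono[OF p, of v]
  have mono_le: "i \<le> j \<Longrightarrow> arrival X v i \<le> arrival X v j" for i j
    using sm by (simp add: strict_mono_less_eq)
  have mono_lt: "i < j \<Longrightarrow> arrival X v i < arrival X v j" for i j
    using sm by (simp add: strict_mono_less)
  show ?thesis
  proof
    assume a: "arrival X v r \<le> t \<and> t < arrival X v (Suc r)"
    have "{j. 1 \<le> j \<and> arrival X v j \<le> t} = {1..r}"
    proof (auto)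
      fix j assume "arrival X v j \<le> t"
      then show "j \<le> r" using a mono_le[of "Suc r" j] by (cases "j \<le> r") auto
    next
      fix j assume "j \<le> r" then show "arrival X v j \<le> t" using a mono_le[of j r] by auto
    qed
    then show "Ncount X v t = r" by (simp add: Ncount_def)
  next
    assume N: "Ncount X v t = r"
    define A where "A = {j. 1 \<le> j \<and> arrival X v j \<le> t}"
    have cA: "card A = r" using N by (simp add: Ncount_def A_def)
    then have fA: "finite A" using r by (intro card_ge_0_finite) simp
    show "arrival X v r \<le> t \<and> t < arrival X v (Suc r)"
    proof (rule ccontr)
      assume "\<not> ?thesis"
      then consider "t < arrival X v r" | "arrival X v (Suc r) \<le> t" by linarith
      then show False
      proof cases
        case 1
        have "A \<subseteq> {1..r-1}"
        proof
          fix j assume "j \<in> A"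
          then have "1 \<le> j" "arrival X v j \<le> t" by (auto simp: A_def)
          then have "j < r" using 1 mono_le[of r j] by (cases "j < r") auto
          then show "j \<in> {1..r-1}" using \<open>1 \<le> j\<close> by auto
        qed
        then have "card A \<le> r - 1" using card_mono[of "{1..r-1}" A] by simp
        then show False using cA r by simp
      next
        case 2
        have "{1..Suc r} \<subseteq> A"
        proof
          fix j assume "j \<in> {1..Suc r}"
          then show "j \<in> A" using 2 mono_le[of j "Suc r"] by (auto simp: A_def)
        qed
        then have "Suc r \<le> card A" using card_mono[OF fA] by (metis card_atLeastAtMost diff_Suc_1)
        then show False using cA by simp
      qed
    qed
  qed
qed

lemma eta_eq:
  assumes p: "\<forall>x. 0 < X x" and r: "1 \<le> r"
  shows "eta X v r = arrival X v r"
proof -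
  have lt: "arrival X v r < arrival X v (Suc r)"
    using arrival_smono[OF p, of v] by (simp add: strict_mono_less)
  show ?thesis unfolding eta_def
    by (rule cInf_eq_minimum) (use lt in \<open>auto simp: Ncount_eq_iff[OF p r]\<close>)
qed

lemma eta_1: "\<forall>x. 0 < X x \<Longrightarrow> eta X v 1 = X (v, 0)"
  by (simp add: eta_eq arrival_def)

lemma eta_k: "\<forall>x. 0 < X x \<Longrightarrow> 1 \<le> k \<Longrightarrow> eta X v k = Rk k X v"
  by (simp add: eta_eq arrival_def Rk_def)

lemma Ncount_0_iff:
  assumes p: "\<forall>x. 0 < X x" and s: "s < arrival X v k"
  shows "Ncount X v s = 0 \<longleftrightarrow> s < X (v, 0)"
proof -
  note sm = arrival_smono[OF p, of v]
  have mono_le: "i \<le> j \<Longrightarrow> arrival X v i \<le> arrival X v j" for i j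
    using sm by (simp add: strict_mono_less_eq)
  define A where "A = {j. 1 \<le> j \<and> arrival X v j \<le> s}"
  have "A \<subseteq> {..<k}"
  proof
    fix j assume "j \<in> A"
    then have "arrival X v j \<le> s" by (simp add: A_def)
    then show "j \<in> {..<k}" using s mono_le[of k j] by (cases "j < k") auto
  qed
  then have fA: "finite A" by (rule finite_subset) simp
  have "Ncount X v s = card A" by (simp add: Ncount_def A_def)
  then have "Ncount X v s = 0 \<longleftrightarrow> A = {}" using fA by simp
  also have "\<dots> \<longleftrightarrow> \<not> arrival X v 1 \<le> s"
    using mono_le[of 1] by (auto simp: A_def) (meson order.trans not_le)
  also have "\<dots> \<longleftrightarrow> s < X (v, 0)" by (simp add: arrival_def not_le)
  finally show ?thesis .
qed

lemma Rk_gt_self: "\<forall>x. 0 < X x \<Longrightarrow> 2 \<le> k \<Longrightarrow> X (v, 0) < Rk k X v"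
proof -
  assume p: "\<forall>x. 0 < X x" and k: "2 \<le> k"
  have "(\<Sum>i\<in>{0, 1}. X (v, i)) \<le> Rk k X v"
  proof -
    have sub: "{0, 1} \<subseteq> {..<k}" using k by auto
    have nn: "\<And>b. b \<in> {..<k} - {0, 1} \<Longrightarrow> 0 \<le> X (v, b)" using p by (simp add: less_imp_le)
    show ?thesis unfolding Rk_def by (rule sum_mono2[OF finite_lessThan sub nn])
  qed
  moreover have "(\<Sum>i\<in>{0::nat, 1}. X (v, i)) = X (v, 0) + X (v, 1)" by simp
  moreover have "0 < X (v, 1)" using p by simp
  ultimately show ?thesis by linarith
qed

lemma prefix_iff_SP: "prefix u v \<longleftrightarrow> u \<in> SP v \<or> u = v"
  by (auto simp: SP_def strict_prefix_def)

lemma card_filter_real: "finite V \<Longrightarrow> real (card {v\<in>V. P v}) = (\<Sum>v\<in>V. if P v then 1 else 0)"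
  by (simp add: sum.inter_filter[symmetric])

lemma records1_eq:
  assumes p: "\<forall>x. 0 < X x" and k: "2 \<le> k"
  shows "real (records1 k T X) = (\<Sum>v\<in>verts T. Ind k X v)"
proof -
  have "{v \<in> verts T. v \<in> alive k T X (eta X v 1)} = {v \<in> verts T. \<forall>u\<in>SP v. X (v, 0) < Rk k X u}"
  proof (intro Collect_cong conj_cong refl)
    fix v
    have "v \<in> alive k T X (eta X v 1) \<longleftrightarrow> v \<in> verts T \<and> (\<forall>u. prefix u v \<longrightarrow> X (v, 0) < Rk k X u)"
    proof -
      have ek: "\<And>u. eta X u k = Rk k X u" using eta_k[OF p] k by simp
      have e1: "eta X v (Suc 0) = X (v, 0)" using eta_1[OF p, of v] by simp
      show ?thesis by (simp add: alive_def e1 ek not_le)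
    qed
    also have "(\<forall>u. prefix u v \<longrightarrow> X (v, 0) < Rk k X u) \<longleftrightarrow> (\<forall>u\<in>SP v. X (v, 0) < Rk k X u)"
      using Rk_gt_self[OF p k, of v] unfolding prefix_iff_SP by blast
    finally show "v \<in> verts T \<Longrightarrow> (v \<in> alive k T X (eta X v 1)) = (\<forall>u\<in>SP v. X (v, 0) < Rk k X u)"
      by simp
  qed
  then show ?thesis
    unfolding records1_def Ind_def by (simp add: card_filter_real)
qed

lemma a_fun_eq:
  assumes p: "\<forall>x. 0 < X x" and k: "2 \<le> k"
  shows "real (a_fun k T X s) = (\<Sum>v\<in>verts T. indicator {..<Mv k X v} s)"
proof -
  have ek: "\<And>u. eta X u k = Rk k X u" using eta_k[OF p] k by simp
  have "{v \<in> alive k T X s. Ncount X v s = 0} = {v \<in> verts T. s < Mv k X v}"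
  proof (rule Collect_cong)
    fix v
    have "(v \<in> alive k T X s \<and> Ncount X v s = 0) \<longleftrightarrow> (v \<in> verts T \<and> s < Mv k X v)"
    proof
      assume a: "v \<in> alive k T X s \<and> Ncount X v s = 0"
      then have al: "\<forall>u. prefix u v \<longrightarrow> s < Rk k X u" "v \<in> verts T"
        using p k ek by (auto simp: alive_def not_le)
      then have "s < arrival X v k" by (simp add: Rk_def arrival_def)
      then have "s < X (v, 0)" using a Ncount_0_iff[OF p] by blast
      then show "v \<in> verts T \<and> s < Mv k X v"
        using al by (auto simp: Mv_def prefix_iff_SP)
    next
      assume a: "v \<in> verts T \<and> s < Mv k X v"
      then have "s < X (v, 0)" "\<forall>u\<in>SP v. s < Rk k X u"
        by (auto simp: Mv_def)
      moreover have "s < Rk k X v" using \<open>s < X (v, 0)\<close> Rk_gt_self[OF p k, of v] by simp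
      ultimately have al: "\<forall>u. prefix u v \<longrightarrow> s < Rk k X u" by (auto simp: prefix_iff_SP)
      then have "s < arrival X v k" by (simp add: Rk_def arrival_def)
      then have "Ncount X v s = 0" using Ncount_0_iff[OF p] \<open>s < X (v, 0)\<close> by blast
      then show "v \<in> alive k T X s \<and> Ncount X v s = 0"
        using a al p k ek by (auto simp: alive_def not_le)
    qed
    then show "(v \<in> alive k T X s \<and> Ncount X v s = 0) = (v \<in> verts T \<and> s < Mv k X v)" .
  qed
  then have "real (a_fun k T X s) = real (card {v \<in> verts T. s < Mv k X v})"
    unfolding a_fun_def by simp
  also have "\<dots> = (\<Sum>v\<in>verts T. if s < Mv k X v then 1 else 0)"
    by (rule card_filter_real) simp
  also have "\<dots> = (\<Sum>v\<in>verts T. indicator {..<Mv k X v} s)"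
    by (intro sum.cong refl) (simp add: indicator_def)
  finally show ?thesis .
qed

lemma a_int_eq:
  assumes p: "\<forall>x. 0 < X x" and k: "2 \<le> k"
  shows "a_int k T X = (\<Sum>v\<in>verts T. Mv k X v)"
proof -
  have Mpos: "0 < Mv k X v" for v using Mv_bounds[OF _ p, of k v] k by simp
  have "a_int k T X = (\<integral>s. (\<Sum>v\<in>verts T. indicator {0..<Mv k X v} s) \<partial>lborel)"
    unfolding a_int_def set_lebesgue_integral_def
  proof (intro Bochner_Integration.integral_cong refl)
    fix s :: real
    have "indicator {0..} s *\<^sub>R real (a_fun k T X s) = (\<Sum>v\<in>verts T. indicator {0..} s * indicator {..<Mv k X v} s)"
      by (simp add: a_fun_eq[OF p k] sum_distrib_left)
    also have "\<dots> = (\<Sum>v\<in>verts T. indicator {0..<Mv k X v} s)"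
      by (intro sum.cong refl) (simp add: indicator_def)
    finally show "indicator {0..} s *\<^sub>R real (a_fun k T X s) = (\<Sum>v\<in>verts T. indicator {0..<Mv k X v} s)" .
  qed
  also have "\<dots> = (\<Sum>v\<in>verts T. (\<integral>s. indicator {0..<Mv k X v} s \<partial>lborel))"
    by (rule Bochner_Integration.integral_sum) (use Mpos in \<open>auto intro!: integrable_real_indicator simp: less_imp_le\<close>)
  also have "\<dots> = (\<Sum>v\<in>verts T. Mv k X v)"
    using Mpos by (intro sum.cong refl) (simp add: less_imp_le)
  finally show ?thesis .
qed

lemma pred_le_real[measurable (raw)]:
  fixes f g :: "'a \<Rightarrow> real"
  shows "f \<in> borel_measurable M \<Longrightarrow> g \<in> borel_measurable M \<Longrightarrow> Measurable.pred M (\<lambda>w. f w \<le> g w)"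
  unfolding Measurable.pred_def by (rule borel_measurable_le)

lemma card_eq_iff_lists:
  fixes S :: "nat set"
  shows "card S = r \<longleftrightarrow>
    (if r = 0 then \<not> (\<exists>xs. xs \<noteq> [] \<and> (\<forall>i. (i \<in> S) = (i \<in> set xs)))
     else (\<exists>xs. distinct xs \<and> length xs = r \<and> (\<forall>i. (i \<in> S) = (i \<in> set xs))))"
proof (cases "r = 0")
  case True
  have "card S = 0 \<longleftrightarrow> \<not> (\<exists>xs. xs \<noteq> [] \<and> S = set xs)"
  proof
    assume "card S = 0"
    then show "\<not> (\<exists>xs. xs \<noteq> [] \<and> S = set xs)" by auto
  next
    assume a: "\<not> (\<exists>xs. xs \<noteq> [] \<and> S = set xs)"
    show "card S = 0"
    proof (rule ccontr)
      assume "card S \<noteq> 0"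
      then have "finite S" "S \<noteq> {}" by (auto simp: card_eq_0_iff)
      then obtain xs where "set xs = S" using finite_list by blast
      then show False using a \<open>S \<noteq> {}\<close> by auto
    qed
  qed
  then show ?thesis using True by (simp add: set_eq_iff)
next
  case False
  have "card S = r \<longleftrightarrow> (\<exists>xs. distinct xs \<and> length xs = r \<and> S = set xs)"
  proof
    assume c: "card S = r"
    then have "finite S" using False by (auto intro: card_ge_0_finite)
    then obtain xs where "set xs = S" "distinct xs" using finite_distinct_list by blast
    then show "\<exists>xs. distinct xs \<and> length xs = r \<and> S = set xs" using c distinct_card by metis
  next
    assume "\<exists>xs. distinct xs \<and> length xs = r \<and> S = set xs"
    then show "card S = r" using distinct_card by metis
  qed
  then show ?thesis using False by (simp add: set_eq_iff)
qed

lemma pred_card_eq: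
  fixes M :: "'a measure" and P :: "nat \<Rightarrow> 'a \<Rightarrow> bool"
  assumes [measurable]: "\<And>i. Measurable.pred M (P i)"
  shows "Measurable.pred M (\<lambda>x. card {i::nat. P i x} = r)"
proof -
  have eq: "(\<lambda>x. card {i::nat. P i x} = r) = (\<lambda>x.
    (if r = 0 then \<not> (\<exists>xs. xs \<noteq> [] \<and> (\<forall>i. P i x = (i \<in> set xs)))
     else (\<exists>xs. distinct xs \<and> length xs = r \<and> (\<forall>i. P i x = (i \<in> set xs)))))"
    by (subst card_eq_iff_lists) simp
  have pi: "Measurable.pred M (\<lambda>x. \<forall>i. P i x = (i \<in> set xs))" for xs
  proof -
    have "Measurable.pred M (\<lambda>x. P i x = (i \<in> set xs))" for i
    proof -
      have [measurable]: "Measurable.pred M (\<lambda>x. P i x)" using assms[of i] by simp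
      show ?thesis by measurable
    qed
    then show ?thesis by measurable
  qed
  have p1: "Measurable.pred M (\<lambda>x. \<not> (\<exists>xs. xs \<noteq> [] \<and> (\<forall>i. P i x = (i \<in> set xs))))"
    using pi by (cases "xs = []") measurable
  have p2: "Measurable.pred M (\<lambda>x. \<exists>xs. distinct xs \<and> length xs = r \<and> (\<forall>i. P i x = (i \<in> set xs)))"
    using pi by measurable
  show ?thesis unfolding eq using p1 p2 by (cases "r = 0") simp_all
qed

lemma arrival_meas[measurable]: "(\<lambda>X. arrival X u j) \<in> borel_measurable PP"
  unfolding arrival_def by measurable

lemma eta_charac:
  fixes X :: om and u :: "nat list"
  assumes r: "1 \<le> r"
  defines "Z \<equiv> {t. Ncount X u t = r}"
  shows "Z \<noteq> {} \<Longrightarrow> \<exists>j\<ge>1. arrival X u j \<in> Z \<and> (\<forall>t\<in>Z. arrival X u j \<le> t)"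
proof -
  assume "Z \<noteq> {}"
  then obtain t0 where t0: "Ncount X u t0 = r" by (auto simp: Z_def)
  define S0 where "S0 = {j. 1 \<le> j \<and> arrival X u j \<le> t0}"
  have cS0: "card S0 = r" using t0 by (simp add: Ncount_def S0_def)
  then have fS0: "finite S0" and neS0: "S0 \<noteq> {}" using r by (auto intro: card_ge_0_finite)
  define \<alpha> where "\<alpha> = Max ((\<lambda>j. arrival X u j) ` S0)"
  have "\<alpha> \<in> (\<lambda>j. arrival X u j) ` S0" unfolding \<alpha>_def using fS0 neS0 by (intro Max_in) auto
  then obtain j0 where j0: "j0 \<in> S0" "arrival X u j0 = \<alpha>" by auto
  have le\<alpha>: "j \<in> S0 \<Longrightarrow> arrival X u j \<le> \<alpha>" for j using fS0 by (auto simp: \<alpha>_def)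
  have \<alpha>t0: "\<alpha> \<le> t0" using j0 by (auto simp: S0_def)
  have "{j. 1 \<le> j \<and> arrival X u j \<le> \<alpha>} = S0"
    using le\<alpha> \<alpha>t0 by (auto simp: S0_def)
  then have inZ: "\<alpha> \<in> Z" using cS0 by (simp add: Z_def Ncount_def)
  have lb: "\<alpha> \<le> t" if tZ: "t \<in> Z" for t
  proof (rule ccontr)
    assume "\<not> \<alpha> \<le> t"
    then have lt: "t < \<alpha>" by simp
    define St where "St = {j. 1 \<le> j \<and> arrival X u j \<le> t}"
    have "St \<subseteq> S0" using lt \<alpha>t0 by (auto simp: St_def S0_def)
    moreover have "j0 \<notin> St" using j0 lt by (auto simp: St_def)
    ultimately have "St \<subset> S0" using j0 by auto
    then have "card St < card S0" by (rule psubset_card_mono[OF fS0])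
    moreover have "card St = r" using tZ by (simp add: Z_def Ncount_def St_def)
    ultimately show False using cS0 by simp
  qed
  show ?thesis using j0 inZ lb by (intro exI[of _ j0]) (auto simp: S0_def)
qed

lemma eta_le_iff:
  fixes X :: om
  assumes r: "1 \<le> r"
  shows "eta X u r \<le> s \<longleftrightarrow>
    (\<exists>j. 1 \<le> j \<and> Ncount X u (arrival X u j) = r \<and> arrival X u j \<le> s) \<or>
    ((\<forall>j. 1 \<le> j \<longrightarrow> Ncount X u (arrival X u j) \<noteq> r) \<and> Inf ({} :: real set) \<le> s)"
    (is "?lhs \<longleftrightarrow> ?rhs")
proof (cases "{t. Ncount X u t = r} = {}")
  case True
  then show ?thesis by (simp add: eta_def)
next
  case False
  from eta_charac[OF r False] obtain j0 where j0: "1 \<le> j0" "Ncount X u (arrival X u j0) = r"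
    "\<forall>t\<in>{t. Ncount X u t = r}. arrival X u j0 \<le> t" by auto
  have e: "eta X u r = arrival X u j0"
    unfolding eta_def by (rule cInf_eq_minimum) (use j0 in auto)
  show ?thesis
  proof
    assume "eta X u r \<le> s" then show "?rhs" using j0 e by auto
  next
    assume "?rhs"
    then show "eta X u r \<le> s" using j0 e by force
  qed
qed

lemma eta_meas:
  assumes r: "1 \<le> r"
  shows "(\<lambda>X. eta X u r) \<in> borel_measurable PP"
proof (subst borel_measurable_iff_le, intro allI)
  fix a :: real
  have c[measurable]: "Measurable.pred PP (\<lambda>w. card {i. 1 \<le> i \<and> arrival w u i \<le> arrival w u j} = r)" for j
    by (rule pred_card_eq) measurable
  have eq: "{w \<in> space PP. eta w u r \<le> a} = {w \<in> space PP.
    (\<exists>j. 1 \<le> j \<and> card {i. 1 \<le> i \<and> arrival w u i \<le> arrival w u j} = r \<and> arrival w u j \<le> a) \<or>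
    ((\<forall>j. 1 \<le> j \<longrightarrow> card {i. 1 \<le> i \<and> arrival w u i \<le> arrival w u j} \<noteq> r) \<and> Inf ({} :: real set) \<le> a)}"
    unfolding eta_le_iff[OF r] Ncount_def ..
  have "Measurable.pred PP (\<lambda>w. (\<exists>j. 1 \<le> j \<and> card {i. 1 \<le> i \<and> arrival w u i \<le> arrival w u j} = r \<and> arrival w u j \<le> a) \<or>
    ((\<forall>j. 1 \<le> j \<longrightarrow> card {i. 1 \<le> i \<and> arrival w u i \<le> arrival w u j} \<noteq> r) \<and> Inf ({} :: real set) \<le> a))"
    by measurable
  then show "{w \<in> space PP. eta w u r \<le> a} \<in> sets PP" unfolding eq pred_def .
qed

lemma records1_meas:
  assumes k: "2 \<le> k"
  shows "(\<lambda>X. real (records1 k T X)) \<in> borel_measurable PP"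
proof -
  have [measurable]: "(\<lambda>X. eta X u k) \<in> borel_measurable PP" for u using eta_meas k by simp
  have [measurable]: "(\<lambda>X. eta X u 1) \<in> borel_measurable PP" for u using eta_meas by simp
  have eq: "(\<lambda>X. real (records1 k T X)) = (\<lambda>X. \<Sum>v\<in>verts T.
     if (\<forall>u\<in>set (prefixes v). \<not> eta X u k \<le> eta X v 1) then 1 else 0)"
  proof (rule ext)
    fix X
    have "{v \<in> verts T. v \<in> alive k T X (eta X v 1)} = {v \<in> verts T. \<forall>u\<in>set (prefixes v). \<not> eta X u k \<le> eta X v 1}"
      by (auto simp: alive_def)
    then show "real (records1 k T X) = (\<Sum>v\<in>verts T. if (\<forall>u\<in>set (prefixes v). \<not> eta X u k \<le> eta X v 1) then 1 else 0)"
      unfolding records1_def by (simp only: card_filter_real[OF finite_verts])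
  qed
  show ?thesis unfolding eq by measurable
qed

lemma a_int_meas:
  assumes k: "2 \<le> k"
  shows "(\<lambda>X. a_int k T X) \<in> borel_measurable PP"
proof -
  have [measurable]: "(\<lambda>X. eta X u k) \<in> borel_measurable PP" for u using eta_meas k by simp
  have eq: "(\<lambda>p. indicator {0..} (snd p) *\<^sub>R real (a_fun k T (fst p) (snd p))) =
     (\<lambda>p. indicator {0..} (snd p) * (\<Sum>v\<in>verts T.
        if (\<forall>u\<in>set (prefixes v). \<not> eta (fst p) u k \<le> snd p) \<and>
           card {i. 1 \<le> i \<and> arrival (fst p) v i \<le> snd p} = 0 then 1 else 0))"
  proof (rule ext)
    fix p :: "om \<times> real"
    have "{v \<in> alive k T (fst p) (snd p). Ncount (fst p) v (snd p) = 0} = {v \<in> verts T.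
        (\<forall>u\<in>set (prefixes v). \<not> eta (fst p) u k \<le> snd p) \<and>
           card {i. 1 \<le> i \<and> arrival (fst p) v i \<le> snd p} = 0}"
      by (auto simp: alive_def Ncount_def)
    then have "real (a_fun k T (fst p) (snd p)) = (\<Sum>v\<in>verts T.
        if (\<forall>u\<in>set (prefixes v). \<not> eta (fst p) u k \<le> snd p) \<and>
           card {i. 1 \<le> i \<and> arrival (fst p) v i \<le> snd p} = 0 then 1 else 0)"
      unfolding a_fun_def by (simp only: card_filter_real[OF finite_verts])
    then show "indicator {0..} (snd p) *\<^sub>R real (a_fun k T (fst p) (snd p)) = indicator {0..} (snd p) * (\<Sum>v\<in>verts T.
        if (\<forall>u\<in>set (prefixes v). \<not> eta (fst p) u k \<le> snd p) \<and>
           card {i. 1 \<le> i \<and> arrival (fst p) v i \<le> snd p} = 0 then 1 else 0)" by simp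
  qed
  have m: "(\<lambda>p. indicator {0..} (snd p) *\<^sub>R real (a_fun k T (fst p) (snd p))) \<in> borel_measurable (PP \<Otimes>\<^sub>M lborel)"
    unfolding eq by measurable
  have "(\<lambda>X. \<integral>s. indicator {0..} s *\<^sub>R real (a_fun k T X s) \<partial>lborel) \<in> borel_measurable PP"
    by (rule lborel.borel_measurable_lebesgue_integral) (use m in \<open>simp add: case_prod_beta'\<close>)
  then show ?thesis unfolding a_int_def set_lebesgue_integral_def .
qed

lemma per_tree:
  assumes k: "2 \<le> k"
  shows "(\<integral>\<omega>. (real (records1 k T \<omega>) - a_int k T \<omega>)^2 \<partial>PP) = (\<integral>\<omega>. a_int k T \<omega> \<partial>PP)"
proof -
  have k0: "0 < k" using k by simp
  have [measurable]: "(\<lambda>X. real (records1 k T X)) \<in> borel_measurable PP" by (rule records1_meas[OF k])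
  have [measurable]: "(\<lambda>X. a_int k T X) \<in> borel_measurable PP" by (rule a_int_meas[OF k])
  have "(\<integral>\<omega>. (real (records1 k T \<omega>) - a_int k T \<omega>)^2 \<partial>PP) = (\<integral>X. (\<Sum>v\<in>verts T. Yv k X v)\<^sup>2 \<partial>PP)"
  proof (rule integral_cong_AE)
    show "AE X in PP. (real (records1 k T X) - a_int k T X)\<^sup>2 = (\<Sum>v\<in>verts T. Yv k X v)\<^sup>2"
      using AE_PP_pos
    proof (rule eventually_mono)
      fix X :: om assume p: "\<forall>x. 0 < X x"
      show "(real (records1 k T X) - a_int k T X)\<^sup>2 = (\<Sum>v\<in>verts T. Yv k X v)\<^sup>2"
        by (simp add: records1_eq[OF p k] a_int_eq[OF p k] Yv_def sum_subtractf)
    qed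
  qed measurable
  also have "\<dots> = (\<integral>X. (\<Sum>v\<in>verts T. Mv k X v) \<partial>PP)"
    by (rule main_identity[OF k0 finite_verts])
  also have "\<dots> = (\<integral>\<omega>. a_int k T \<omega> \<partial>PP)"
  proof (rule integral_cong_AE)
    show "AE X in PP. (\<Sum>v\<in>verts T. Mv k X v) = a_int k T X"
      using AE_PP_pos
    proof (rule eventually_mono)
      fix X :: om assume p: "\<forall>x. 0 < X x"
      show "(\<Sum>v\<in>verts T. Mv k X v) = a_int k T X"
        by (simp add: a_int_eq[OF p k])
    qed
  qed measurable
  finally show ?thesis .
qed

theorem lemma6:
  fixes xi :: "nat pmf" and k n :: nat
  assumes "k \<ge> 2" and "n \<ge> 1"
    and "summable (\<lambda>p. real p * pmf xi p)" and "(\<Sum>p. real p * pmf xi p) = 1"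
    and "summable (\<lambda>p. real p * (real p - 1) * pmf xi p)"
    and "0 < (\<Sum>p. real p * (real p - 1) * pmf xi p)"
    and "0 < (\<Sum>t | tsize t = n. gw_weight xi t)"
  shows "cond_GW_expect xi n
           (\<lambda>T. \<integral>\<omega>. (real (records1 k T \<omega>) - a_int k T \<omega>)^2 \<partial>PP)
       = cond_GW_expect xi n (\<lambda>T. \<integral>\<omega>. a_int k T \<omega> \<partial>PP)"
  using per_tree[OF assms(1)] by simp

end
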